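(* Let $n,m\ge1$, $r>0$, and let $\mathbf b_1,\dots,\mathbf b_m\in[0,\infty)^n$ be nonzero vectors. Put $D_{ij}=\frac{r}{m}(\mathbf b_i\cdot\mathbf b_j)$ and $\overline D=\max_{i,j}D_{ij}$. Define $\alpha^{(t)}\in\mathbb{R}^m$, $t\ge0$, by $\alpha^{(0)}_k=\sqrt{1/(\overline D m)}$ for all $k$, and, given $\alpha^{(t)}$: let $E_i^{(t)}=\sum_{j=1}^m D_{ij}\alpha^{(t)}_i\alpha^{(t)}_j-1$, choose $k=k_t$ with $|E^{(t)}_k|=\max_i|E^{(t)}_i|$, set $\alpha^{(t+1)}_i=\alpha^{(t)}_i$ for $i\neq k$ and $\alpha^{(t+1)}_k=\frac{-s+\sqrt{s^2+4D_{kk}}}{2D_{kk}}$ with $s=\sum_{i\ne k}D_{ik}\alpha^{(t)}_i$. Let $E^{(t)}=\sum_{i=1}^m|E^{(t)}_i|$. Then the sequence $(E^{(t)})_{t\ge0}$ is decreasing: $E^{(t+1)}\le E^{(t)}$ for all $t\ge0$. *)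

theory Defs
  imports Main Complex_Main
begin

text \<open>Vectors b_1..b_m in R^n are encoded as b :: nat => nat => real, with b i l the
  l-th component of the i-th vector (i < m, l < n). An alpha in R^m is a nat => real
  used at indices < m.\<close>

definition Dm :: "real \<Rightarrow> nat \<Rightarrow> nat \<Rightarrow> (nat \<Rightarrow> nat \<Rightarrow> real) \<Rightarrow> nat \<Rightarrow> nat \<Rightarrow> real" where
  "Dm r m n b i j = r / real m * (\<Sum>l<n. b i l * b j l)"

definition Dbar :: "real \<Rightarrow> nat \<Rightarrow> nat \<Rightarrow> (nat \<Rightarrow> nat \<Rightarrow> real) \<Rightarrow> real" where
  "Dbar r m n b = Max {Dm r m n b i j | i j. i < m \<and> j < m}"

definition Err :: "real \<Rightarrow> nat \<Rightarrow> nat \<Rightarrow> (nat \<Rightarrow> nat \<Rightarrow> real) \<Rightarrow> (nat \<Rightarrow> real) \<Rightarrow> nat \<Rightarrow> real" where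
  "Err r m n b a i = (\<Sum>j<m. Dm r m n b i j * a i * a j) - 1"

definition TotErr :: "real \<Rightarrow> nat \<Rightarrow> nat \<Rightarrow> (nat \<Rightarrow> nat \<Rightarrow> real) \<Rightarrow> (nat \<Rightarrow> real) \<Rightarrow> real" where
  "TotErr r m n b a = (\<Sum>i<m. \<bar>Err r m n b a i\<bar>)"

end

theory Submission
  imports Defs
begin

theorem lemma3:
  fixes n m :: nat and r :: real and b :: "nat \<Rightarrow> nat \<Rightarrow> real"
    and alpha :: "nat \<Rightarrow> nat \<Rightarrow> real" and k :: "nat \<Rightarrow> nat"
  assumes "n \<ge> 1" and "m \<ge> 1" and "r > 0"
    and b_nonneg: "\<And>i l. i < m \<Longrightarrow> l < n \<Longrightarrow> b i l \<ge> 0"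
    and b_nonzero: "\<And>i. i < m \<Longrightarrow> \<exists>l<n. b i l \<noteq> 0"
    and init: "\<And>i. i < m \<Longrightarrow> alpha 0 i = sqrt (1 / (Dbar r m n b * real m))"
    and k_range: "\<And>t. k t < m"
    and k_max: "\<And>t i. i < m \<Longrightarrow> \<bar>Err r m n b (alpha t) i\<bar> \<le> \<bar>Err r m n b (alpha t) (k t)\<bar>"
    and step_other: "\<And>t i. i < m \<Longrightarrow> i \<noteq> k t \<Longrightarrow> alpha (Suc t) i = alpha t i"
    and step_k: "\<And>t. alpha (Suc t) (k t) =
        (let s = (\<Sum>i\<in>{..<m} - {k t}. Dm r m n b i (k t) * alpha t i);
             d = Dm r m n b (k t) (k t)
         in (- s + sqrt (s\<^sup>2 + 4 * d)) / (2 * d))"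
  shows "\<forall>t. TotErr r m n b (alpha (Suc t)) \<le> TotErr r m n b (alpha t)"
proof -
  let ?D = "Dm r m n b"
  have sym: "\<And>i j. ?D i j = ?D j i" unfolding Dm_def by (simp add: mult.commute)
  have Dnn: "\<And>i j. i < m \<Longrightarrow> j < m \<Longrightarrow> ?D i j \<ge> 0"
    unfolding Dm_def using assms(3) b_nonneg by (auto intro!: sum_nonneg mult_nonneg_nonneg divide_nonneg_nonneg)
  have Dpos: "?D i i > 0" if im: "i < m" for i
  proof -
    obtain l where l: "l < n" "b i l \<noteq> 0" using b_nonzero[OF im] by blast
    have "(\<Sum>l'<n. b i l' * b i l') > 0"
      by (rule sum_pos2[of "{..<n}" l]) (use l in \<open>auto simp: zero_less_mult_iff\<close>)
    then show ?thesis unfolding Dm_def using assms(2,3) by (simp add: divide_pos_pos)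
  qed
  have Dbarpos: "Dbar r m n b > 0"
  proof -
    have fin: "finite {?D i j | i j. i < m \<and> j < m}"
    proof -
      have "{?D i j | i j. i < m \<and> j < m} = (\<lambda>(i,j). ?D i j) ` ({..<m} \<times> {..<m})" by auto
      then show ?thesis by simp
    qed
    have "?D 0 0 \<in> {?D i j | i j. i < m \<and> j < m}" using assms(2) by (intro CollectI exI[of _ 0]) simp
    then have "?D 0 0 \<le> Dbar r m n b" unfolding Dbar_def by (rule Max_ge[OF fin])
    with Dpos[of 0] assms(2) show ?thesis by simp
  qed
  have qsol: "\<And>s d y. d > 0 \<Longrightarrow> s \<ge> 0 \<Longrightarrow> y = (- s + sqrt (s\<^sup>2 + 4 * d)) / (2 * d) \<Longrightarrow> y > 0 \<and> y * (s + d * y) = 1"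
  proof -
    fix s d y :: real assume d: "d > 0" and s: "s \<ge> 0" and y: "y = (- s + sqrt (s\<^sup>2 + 4 * d)) / (2 * d)"
    define q where "q = sqrt (s\<^sup>2 + 4 * d)"
    have q2: "q^2 = s\<^sup>2 + 4 * d" unfolding q_def using d s by simp
    have "sqrt (s\<^sup>2) < sqrt (s\<^sup>2 + 4 * d)" using d by (intro real_sqrt_less_mono) simp
    then have qs: "q > s" unfolding q_def using s by simp
    define x where "x = (- s + q) / (2 * d)"
    have "x > 0" unfolding x_def using qs d by simp
    moreover have "x * (s + d * x) = 1"
    proof -
      have dx: "d * x = (q - s) / 2" unfolding x_def using d by simp
      have "x * (s + d * x) = x * ((q + s) / 2)" using dx by simp
      also have "\<dots> = (q - s) * (q + s) / (4 * d)" unfolding x_def using d by (simp add: field_simps)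
      also have "(q - s) * (q + s) = 4 * d" using q2 by (simp add: algebra_simps power2_eq_square)
      finally show ?thesis using d by simp
    qed
    moreover have "y = x" unfolding y x_def q_def ..
    ultimately show "y > 0 \<and> y * (s + d * y) = 1" by simp
  qed
  have pos: "\<forall>i<m. alpha t i > 0" for t
  proof (induction t)
    case 0
    then show ?case using init Dbarpos assms(2) by simp
  next
    case (Suc t)
    let ?s = "\<Sum>i\<in>{..<m} - {k t}. ?D i (k t) * alpha t i"
    have s0: "?s \<ge> 0" using Suc Dnn k_range
      by (intro sum_nonneg mult_nonneg_nonneg) (auto simp: less_imp_le)
    have "alpha (Suc t) (k t) > 0"
      using qsol[OF Dpos[OF k_range] s0 step_k[of t, unfolded Let_def]] by simp
    then show ?case
    proof (intro allI impI)
      fix i assume "alpha (Suc t) (k t) > 0" "i < m"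
      then show "alpha (Suc t) i > 0" using Suc step_other[of i t] by (cases "i = k t") auto
    qed
  qed
  show ?thesis
  proof
    fix t
    define a where "a = alpha t"
    define a' where "a' = alpha (Suc t)"
    define K where "K = k t"
    define d where "d = ?D K K"
    define s where "s = (\<Sum>i\<in>{..<m} - {K}. ?D i K * a i)"
    define \<delta> where "\<delta> = a' K - a K"
    have K: "K < m" unfolding K_def by (rule k_range)
    have d0: "d > 0" unfolding d_def using Dpos K by simp
    have apos: "\<And>i. i < m \<Longrightarrow> a i > 0" unfolding a_def using pos by simp
    have a'pos: "\<And>i. i < m \<Longrightarrow> a' i > 0" unfolding a'_def using pos by simp
    have s0: "s \<ge> 0" unfolding s_def using apos Dnn K
      by (intro sum_nonneg mult_nonneg_nonneg) (auto simp: less_imp_le)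
    have oth: "\<And>i. i < m \<Longrightarrow> i \<noteq> K \<Longrightarrow> a' i = a i"
      unfolding a_def a'_def K_def using step_other by simp
    have a'K: "a' K * (s + d * a' K) = 1"
    proof -
      have eq: "a' K = (- s + sqrt (s\<^sup>2 + 4 * d)) / (2 * d)"
        unfolding a'_def s_def d_def K_def a_def using step_k[of t] unfolding Let_def .
      show ?thesis using qsol[OF d0 s0 eq] by simp
    qed
    have split: "\<And>f. (\<Sum>j<m. f j) = f K + (\<Sum>j\<in>{..<m} - {K}. f j)"
      using K by (simp add: sum.remove)
    have ErrK: "Err r m n b c K = c K * ((\<Sum>j\<in>{..<m} - {K}. ?D K j * c j) + d * c K) - 1" for c
      unfolding Err_def d_def
      by (subst split) (simp add: sum_distrib_left algebra_simps)
    have sK: "(\<Sum>j\<in>{..<m} - {K}. ?D K j * a' j) = s"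
      unfolding s_def using oth sym by (intro sum.cong) auto
    have sK': "(\<Sum>j\<in>{..<m} - {K}. ?D K j * a j) = s"
      unfolding s_def using sym by (intro sum.cong) auto
    have E'K: "Err r m n b a' K = 0" using ErrK[of a'] sK a'K by simp
    have EK: "\<bar>Err r m n b a K\<bar> = \<bar>\<delta>\<bar> * (s + d * (a K + a' K))"
    proof -
      have "Err r m n b a K = a K * (s + d * a K) - a' K * (s + d * a' K)"
        using ErrK[of a] sK' a'K by simp
      also have "\<dots> = - \<delta> * (s + d * (a K + a' K))" unfolding \<delta>_def by (simp add: algebra_simps)
      finally show ?thesis using s0 d0 apos[OF K] a'pos[OF K] by (simp add: abs_mult)
    qed
    have Eoth: "Err r m n b a' i = Err r m n b a i + a i * ?D i K * \<delta>"
      if i: "i < m" "i \<noteq> K" for i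
    proof -
      have "Err r m n b a' i = (\<Sum>j<m. ?D i j * a i * a' j) - 1"
        unfolding Err_def using oth i by simp
      also have "(\<Sum>j<m. ?D i j * a i * a' j) = ?D i K * a i * a' K + (\<Sum>j\<in>{..<m} - {K}. ?D i j * a i * a j)"
        using oth by (subst split) (auto intro!: sum.cong)
      also have "(\<Sum>j<m. ?D i j * a i * a j) = ?D i K * a i * a K + (\<Sum>j\<in>{..<m} - {K}. ?D i j * a i * a j)"
        by (rule split)
      ultimately show ?thesis unfolding Err_def \<delta>_def by (simp add: algebra_simps)
    qed
    have "TotErr r m n b a' = (\<Sum>i\<in>{..<m} - {K}. \<bar>Err r m n b a i + a i * ?D i K * \<delta>\<bar>)"
      unfolding TotErr_def using E'K Eoth by (subst split) (auto intro!: sum.cong)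
    also have "\<dots> \<le> (\<Sum>i\<in>{..<m} - {K}. \<bar>Err r m n b a i\<bar> + \<bar>\<delta>\<bar> * (?D i K * a i))"
    proof (rule sum_mono)
      fix i assume i: "i \<in> {..<m} - {K}"
      have "\<bar>a i * ?D i K * \<delta>\<bar> = \<bar>\<delta>\<bar> * (?D i K * a i)"
        using apos[of i] Dnn[of i K] i K by (simp add: abs_mult)
      then show "\<bar>Err r m n b a i + a i * ?D i K * \<delta>\<bar> \<le> \<bar>Err r m n b a i\<bar> + \<bar>\<delta>\<bar> * (?D i K * a i)"
        by (metis abs_triangle_ineq)
    qed
    also have "\<dots> = (\<Sum>i\<in>{..<m} - {K}. \<bar>Err r m n b a i\<bar>) + \<bar>\<delta>\<bar> * s"
      unfolding s_def by (simp add: sum.distrib sum_distrib_left)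
    also have "\<dots> \<le> (\<Sum>i\<in>{..<m} - {K}. \<bar>Err r m n b a i\<bar>) + \<bar>Err r m n b a K\<bar>"
    proof -
      have "\<bar>\<delta>\<bar> * s \<le> \<bar>\<delta>\<bar> * (s + d * (a K + a' K))"
        using d0 apos[OF K] a'pos[OF K] by (intro mult_left_mono) auto
      then show ?thesis using EK by simp
    qed
    also have "\<dots> = TotErr r m n b a" unfolding TotErr_def by (subst split) simp
    finally show "TotErr r m n b (alpha (Suc t)) \<le> TotErr r m n b (alpha t)"
      unfolding a_def a'_def .
  qed
qed

end
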